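(* Let $K\subset\mathbb{R}$ be a compact set with $\mathrm{conv}(K)=[a,b]$, and suppose there exists $\varepsilon>0$ such that $[a,a+\varepsilon]\cup[b-\varepsilon,b]\subset K$. Then there exists an index $\ell\in\mathbb{N}$, depending only on $\varepsilon$ and $b-a$, such that \[\frac{1}{2^\ell}\sum_{j=1}^{2^\ell}K=\frac{1}{2^{\ell+k}}\sum_{j=1}^{2^{\ell+k}}K\quad\text{for every }k\in\mathbb{N}.\] Moreover, $\ell$ increases with $b-a$ and decreases as $\varepsilon$ increases.
   Context: $\sum_{j=1}^N K$ denotes the Minkowski sum $K+\cdots+K$ ($N$ copies), where $X+Y=\{x+y:x\in X,y\in Y\}$, and $tX=\{tx:x\in X\}$. $\mathrm{conv}$ denotes convex hull. *)

theory Defs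
  imports "HOL-Analysis.Analysis"
begin

definition msum :: "real set \<Rightarrow> real set \<Rightarrow> real set" where
  "msum X Y = {x + y | x y. x \<in> X \<and> y \<in> Y}"

fun msum_pow :: "nat \<Rightarrow> real set \<Rightarrow> real set" where
  "msum_pow 0 K = {0}"
| "msum_pow (Suc n) K = msum K (msum_pow n K)"

definition dil :: "real \<Rightarrow> real set \<Rightarrow> real set" where
  "dil t X = (\<lambda>x. t * x) ` X"

end

theory Submission
  imports Defs
begin

lemma msum_pow_sub: "msum_pow m K \<subseteq> {real m * a..real m * b}" if "K \<subseteq> {a..b}"
proof (induction m)
  case 0 then show ?case by simp
next
  case (Suc m)
  show ?case
  proof
    fix x assume "x \<in> msum_pow (Suc m) K"
    then obtain y z where "x = y + z" "y \<in> K" "z \<in> msum_pow m K" by (auto simp: msum_def)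
    with Suc that have "a \<le> y" "y \<le> b" "real m * a \<le> z" "z \<le> real m * b" by auto
    then show "x \<in> {real (Suc m) * a..real (Suc m) * b}" using \<open>x = y + z\<close> by (simp add: algebra_simps)
  qed
qed

lemma msum_pow_int: assumes "{p..q} \<subseteq> K" "p \<le> q"
  shows "{real m * p..real m * q} \<subseteq> msum_pow m K"
proof (induction m)
  case 0 then show ?case by simp
next
  case (Suc m)
  show ?case
  proof
    fix y assume y: "y \<in> {real (Suc m) * p..real (Suc m) * q}"
    define u where "u = y / (real m + 1)"
    have pos: "real m + 1 > 0" by simp
    have "u \<in> {p..q}" using y pos unfolding u_def by (auto simp: field_simps)
    hence "u \<in> K" using assms by auto
    have "y - u = real m * u" unfolding u_def using pos by (simp add: field_simps)
    hence "y - u \<in> {real m * p..real m * q}" using \<open>u \<in> {p..q}\<close>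
      by (auto intro: mult_left_mono)
    hence "y - u \<in> msum_pow m K" using Suc by auto
    moreover have "y = u + (y - u)" by simp
    ultimately show "y \<in> msum_pow (Suc m) K" using \<open>u \<in> K\<close> unfolding msum_pow.simps msum_def
      by blast
  qed
qed

lemma msum_pow_add: "msum (msum_pow m K) (msum_pow n K) \<subseteq> msum_pow (m + n) K"
proof (induction m)
  case 0 then show ?case by (auto simp: msum_def)
next
  case (Suc m)
  show ?case
  proof
    fix x assume "x \<in> msum (msum_pow (Suc m) K) (msum_pow n K)"
    then obtain y z w where "x = (y + z) + w" "y \<in> K" "z \<in> msum_pow m K" "w \<in> msum_pow n K"
      by (auto simp: msum_def)
    then have "z + w \<in> msum_pow (m + n) K" using Suc by (auto simp: msum_def)
    moreover have "x = y + (z + w)" using \<open>x = _\<close> by simp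
    ultimately have "x \<in> msum K (msum_pow (m + n) K)" using \<open>y \<in> K\<close>
      unfolding msum_def by blast
    then show "x \<in> msum_pow (Suc m + n) K" by simp
  qed
qed

lemma cover:
  assumes A: "{a..a+e} \<subseteq> K" and B: "{b-e..b} \<subseteq> K" and K: "K \<subseteq> {a..b}" and e: "e > 0"
    and N: "b - a \<le> real N * e"
  shows "msum_pow N K = {real N * a..real N * b}"
proof
  show "msum_pow N K \<subseteq> {real N * a..real N * b}" using msum_pow_sub[OF K] .
next
  have "a + e \<in> K" using A e by auto
  hence ed: "e \<le> b - a" using K by auto
  define c where "c = b - a - e"
  have c0: "c \<ge> 0" using ed c_def by simp
  show "{real N * a..real N * b} \<subseteq> msum_pow N K"
  proof
    fix x assume x: "x \<in> {real N * a..real N * b}"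
    define t where "t = x - real N * a"
    have t0: "0 \<le> t" and tN: "t \<le> real N * (b - a)" using x by (auto simp: t_def algebra_simps)
    obtain j :: nat where jN: "j \<le> N" and j1: "real j * c \<le> t" and j2: "t - real N * e \<le> real j * c"
    proof (cases "c = 0")
      case True
      then have "b - a = e" using c_def by simp
      then show ?thesis using that[of 0] t0 tN by (simp add: True mult.commute)
    next
      case False
      hence cp: "c > 0" using c0 by simp
      show ?thesis
      proof (cases "t / c \<ge> real N")
        case True
        have "real N * c \<le> t" using True cp by (simp add: field_simps)
        moreover have "t - real N * e \<le> real N * c" using tN by (simp add: c_def algebra_simps)
        ultimately show ?thesis using that[of N] by simp
      next
        case F: False
        define j where "j = nat \<lfloor>t / c\<rfloor>"
        have tc0: "t / c \<ge> 0" using t0 cp by simp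
        have rj: "real j = of_int \<lfloor>t / c\<rfloor>" unfolding j_def using tc0 by simp
        have "real j \<le> t / c" using rj by simp
        hence h1: "real j * c \<le> t" using cp by (simp add: field_simps)
        have "t / c < real j + 1" using rj by linarith
        hence "t < real j * c + c" using cp by (simp add: field_simps)
        moreover have "c \<le> real N * e" using N c_def e by simp
        ultimately have h2: "t - real N * e \<le> real j * c" by simp
        have "real j \<le> real N" using \<open>real j \<le> t / c\<close> F by simp
        hence "j \<le> N" by simp
        then show ?thesis using that h1 h2 by simp
      qed
    qed
    define u where "u = max (real j * (b - e)) (x - real (N - j) * (a + e))"
    have rNj: "real (N - j) = real N - real j" using jN by simp
    have u1: "u \<in> {real j * (b - e)..real j * b}"
    proof -
      have a1: "real j * (b - e) \<le> real j * b" using e by (simp add: mult_left_mono)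
      have a2: "x - real (N - j) * (a + e) \<le> real j * b"
        using j2 unfolding rNj t_def c_def by (simp add: algebra_simps)
      show ?thesis using a1 a2 unfolding u_def by auto
    qed
    have u2: "x - u \<in> {real (N - j) * a..real (N - j) * (a + e)}"
    proof -
      have j2': "x + real j * a + real j * e \<le> real N * a + real N * e + real j * b"
        using j2 unfolding t_def c_def by (simp add: algebra_simps)
      have j1': "real j * b - real j * a - real j * e \<le> x - real N * a"
        using j1 unfolding t_def c_def by (simp add: algebra_simps)
      have "x - u \<le> real (N - j) * (a + e)" unfolding u_def by simp
      moreover have "real (N - j) * a \<le> x - real j * (b - e)" using j1' unfolding rNj by (simp add: algebra_simps)
      moreover have "real (N - j) * a \<le> real (N - j) * (a + e)" using e by (intro mult_left_mono) auto
      ultimately show ?thesis unfolding u_def by auto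
    qed
    have "u \<in> msum_pow j K" using msum_pow_int[OF B, of j] u1 e by auto
    moreover have "x - u \<in> msum_pow (N - j) K" using msum_pow_int[OF A, of "N - j"] u2 e by auto
    moreover have "x = u + (x - u)" by simp
    ultimately have "x \<in> msum (msum_pow j K) (msum_pow (N - j) K)"
      unfolding msum_def by blast
    then show "x \<in> msum_pow N K" using msum_pow_add[of j K "N - j"] jN by auto
  qed
qed

lemma dil_int: assumes "N > 0" shows "dil (1 / real N) {real N * a..real N * b} = {a..b}"
proof -
  have "{a..b} = (\<lambda>x. (1 / real N) * x) ` {real N * a..real N * b}"
  proof (intro set_eqI iffI)
    fix y assume "y \<in> {a..b}"
    then show "y \<in> (\<lambda>x. (1 / real N) * x) ` {real N * a..real N * b}"
      using assms by (intro image_eqI[of _ _ "real N * y"]) (auto)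
  next
    fix y assume "y \<in> (\<lambda>x. (1 / real N) * x) ` {real N * a..real N * b}"
    then show "y \<in> {a..b}" using assms by (auto simp: field_simps)
  qed
  then show ?thesis unfolding dil_def by simp
qed

theorem lemma14:
  shows "\<exists>L :: real \<Rightarrow> real \<Rightarrow> nat.
     (\<forall>(K :: real set) a b \<epsilon>.
        compact K \<longrightarrow> convex hull K = {a..b} \<longrightarrow> \<epsilon> > 0 \<longrightarrow>
        {a..a+\<epsilon>} \<union> {b-\<epsilon>..b} \<subseteq> K \<longrightarrow>
        (\<forall>k::nat. dil (1 / 2 ^ L \<epsilon> (b - a)) (msum_pow (2 ^ L \<epsilon> (b - a)) K) =
                   dil (1 / 2 ^ (L \<epsilon> (b - a) + k)) (msum_pow (2 ^ (L \<epsilon> (b - a) + k)) K)))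
   \<and> (\<forall>\<epsilon> d d'. 0 < \<epsilon> \<longrightarrow> \<epsilon> \<le> d \<longrightarrow> d \<le> d' \<longrightarrow> L \<epsilon> d \<le> L \<epsilon> d')
   \<and> (\<forall>\<epsilon> \<epsilon>' d. 0 < \<epsilon> \<longrightarrow> \<epsilon> \<le> \<epsilon>' \<longrightarrow> \<epsilon>' \<le> d \<longrightarrow> L \<epsilon>' d \<le> L \<epsilon> d)"
proof -
  define L where "L = (\<lambda>(e::real) (d::real). LEAST n::nat. d \<le> 2 ^ n * e)"
  have ex: "\<exists>n::nat. d \<le> 2 ^ n * e" if "e > 0" for e d :: real
  proof -
    obtain n where "d / e < 2 ^ n" using real_arch_pow[of 2 "d / e"] by auto
    then show ?thesis using that by (intro exI[of _ n]) (simp add: field_simps)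
  qed
  have LI: "d \<le> 2 ^ L e d * e" if "e > 0" for e d :: real
    unfolding L_def using LeastI_ex[OF ex[OF that]] by simp
  have main: "dil (1 / 2 ^ (L e (b - a) + k)) (msum_pow (2 ^ (L e (b - a) + k)) K) = {a..b}"
    if "convex hull K = {a..b}" "e > 0" "{a..a+e} \<union> {b-e..b} \<subseteq> K" for K a b e and k :: nat
  proof -
    define N :: nat where "N = 2 ^ (L e (b - a) + k)"
    have K: "K \<subseteq> {a..b}" using hull_subset[of K convex] that(1) by simp
    have "b - a \<le> 2 ^ L e (b - a) * e" using LI[OF that(2)] .
    also have "\<dots> \<le> 2 ^ (L e (b - a) + k) * e"
      using that(2) by (intro mult_right_mono) (auto simp: power_add)
    finally have "b - a \<le> real N * e" unfolding N_def by simp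
    moreover have "{a..a+e} \<subseteq> K" "{b-e..b} \<subseteq> K" using that(3) by auto
    ultimately have "msum_pow N K = {real N * a..real N * b}"
      using cover[OF _ _ K that(2)] by blast
    moreover have "N > 0" unfolding N_def by simp
    ultimately have "dil (1 / real N) (msum_pow N K) = {a..b}" using dil_int by simp
    then show ?thesis unfolding N_def by simp
  qed
  show ?thesis
  proof (intro exI[of _ L] conjI allI impI)
    fix K :: "real set" and a b e :: real and k :: nat
    assume "compact K" "convex hull K = {a..b}" "0 < e" "{a..a+e} \<union> {b-e..b} \<subseteq> K"
    then show "dil (1 / 2 ^ L e (b - a)) (msum_pow (2 ^ L e (b - a)) K) =
               dil (1 / 2 ^ (L e (b - a) + k)) (msum_pow (2 ^ (L e (b - a) + k)) K)"
      using main[of K a b e 0] main[of K a b e k] by simp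
  next
    fix e d d' :: real assume h: "0 < e" "e \<le> d" "d \<le> d'"
    have "d \<le> 2 ^ L e d' * e" using LI[OF h(1), of d'] h by simp
    then show "L e d \<le> L e d'" unfolding L_def by (rule Least_le)
  next
    fix e e' d :: real assume h: "0 < e" "e \<le> e'" "e' \<le> d"
    have "2 ^ L e d * e \<le> 2 ^ L e d * e'" using h by (intro mult_left_mono) auto
    then have "d \<le> 2 ^ L e d * e'" using LI[OF h(1), of d] by linarith
    then show "L e' d \<le> L e d" unfolding L_def by (rule Least_le)
  qed
qed

end
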